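(* Let $\mathbf{J}\in\mathbb{R}^{n\times n}$ be a real symmetric matrix with zero diagonal, and let $\alpha,\beta>0$ be such that $\lambda_{\min}(\mathbf{J}+\alpha\mathbf{I})>0$. Let $\mathcal{T}(\boldsymbol{x})=\varphi(\beta^{-1}(\mathbf{J}+\alpha\mathbf{I})\boldsymbol{x})$ with $\varphi$ the componentwise real cube root, let $\boldsymbol{x}^{(0)}\in\mathbb{R}^n$ be arbitrary, $\boldsymbol{x}^{(k+1)}=\mathcal{T}(\boldsymbol{x}^{(k)})$, and let $\boldsymbol{x}^*$ be the limit of $\{\boldsymbol{x}^{(k)}\}$. Suppose all components of $\boldsymbol{x}^*$ are nonzero and $\|\mathbf{J}_{\mathcal{T}}(\boldsymbol{x}^* )\|_2<1$, where $\mathbf{J}_{\mathcal{T}}$ denotes the Jacobian matrix of $\mathcal{T}$ and $\|\cdot\|_2$ the spectral norm (largest singular value). Then $\boldsymbol{x}^*$ is a strict local minimizer of $\mathcal{H}(\boldsymbol{x})=\frac{\beta}{4}\sum_i x_i^4-\frac{\alpha}{2}\sum_i x_i^2-\frac12\boldsymbol{x}^\top\mathbf{J}\boldsymbol{x}$.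
   Context: Under the stated hypotheses the iterates $\boldsymbol{x}^{(k)}$ (the DOCH iterates for minimizing $\mathcal{H}$) converge, so the limit $\boldsymbol{x}^*$ exists. *)

theory Defs
  imports "HOL-Analysis.Analysis"
begin

text \<open>Smallest eigenvalue of a real square matrix (used for symmetric matrices,
  whose eigenvalues are all real).\<close>
definition lambda_min :: "real^'n^'n \<Rightarrow> real" where
  "lambda_min A = Inf {l. \<exists>v. v \<noteq> 0 \<and> A *v v = l *\<^sub>R v}"

definition doch_map :: "real^'n^'n \<Rightarrow> real \<Rightarrow> real \<Rightarrow> real^'n \<Rightarrow> real^'n" where
  "doch_map J \<alpha> \<beta> x = (\<chi> i. root 3 ((inverse \<beta> *\<^sub>R ((J + \<alpha> *\<^sub>R mat 1) *v x)) $ i))"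

definition H_obj :: "real^'n^'n \<Rightarrow> real \<Rightarrow> real \<Rightarrow> real^'n \<Rightarrow> real" where
  "H_obj J \<alpha> \<beta> x = \<beta> / 4 * (\<Sum>i\<in>UNIV. (x $ i) ^ 4) - \<alpha> / 2 * (\<Sum>i\<in>UNIV. (x $ i) ^ 2)
     - 1 / 2 * (x \<bullet> (J *v x))"

definition strict_local_min :: "('a::metric_space \<Rightarrow> real) \<Rightarrow> 'a \<Rightarrow> bool" where
  "strict_local_min f x0 \<longleftrightarrow> (\<exists>e>0. \<forall>y. y \<noteq> x0 \<and> dist y x0 < e \<longrightarrow> f x0 < f y)"

end

theory Submission
  imports Defs
begin

lemma matJ_sym:
  fixes J :: "real^'n^'n"
  assumes "transpose J = J"
  shows "(J *v y) \<bullet> z = y \<bullet> (J *v z)"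
proof -
  have "y \<bullet> (J *v z) = (y v* J) \<bullet> z" by (simp add: dot_lmul_matrix)
  also have "y v* J = transpose J *v y" by (simp add: transpose_matrix_vector)
  finally show ?thesis using assms by simp
qed

lemma doubling:
  fixes B :: "'a \<Rightarrow> 'a" and ip :: "'a \<Rightarrow> 'a \<Rightarrow> real"
  assumes sa: "\<And>y z. ip (B y) z = ip y (B z)"
    and cs: "\<And>y z. (ip y z)^2 \<le> ip y y * ip z z"
    and hpos: "ip h h > 0"
    and hge: "ip (B h) h \<ge> ip h h"
  shows "ip ((B ^^ (2^k)) h) ((B ^^ (2^k)) h) \<ge> ip h h"
proof -
  have sak: "ip ((B ^^ n) y) z = ip y ((B ^^ n) z)" for n y z
    by (induction n arbitrary: y z) (simp_all add: sa funpow_swap1)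
  have key: "ip w w \<ge> ip h h" if "ip w h \<ge> ip h h" for w
  proof -
    have "(ip h h)^2 \<le> (ip w h)^2" using that hpos
      by (simp add: power_mono)
    also have "\<dots> \<le> ip w w * ip h h" using cs by simp
    finally have "ip h h * ip h h \<le> ip w w * ip h h" by (simp add: power2_eq_square)
    then show ?thesis using hpos by simp
  qed
  show ?thesis
  proof (induction k)
    case 0
    then show ?case using key hge by simp
  next
    case (Suc k)
    let ?n = "2^k :: nat"
    have "(B ^^ (2^Suc k)) h = (B ^^ ?n) ((B ^^ ?n) h)"
      by (simp only: power_Suc mult_2 funpow_add comp_apply)
    then have "ip ((B ^^ (2^Suc k)) h) h = ip ((B ^^ ?n) h) ((B ^^ ?n) h)"
      by (simp add: sak)
    then show ?case using Suc key by simp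
  qed
qed

lemma inv_div_aux: "inverse (3 * (x::real)^2) * (a / b) = a / (3 * b * x^2)"
  by (simp add: field_simps)

lemma L1: "(\<forall>b\<in>(Basis::(real^'n) set). P b) \<longleftrightarrow> (\<forall>i. P (axis i 1))"
proof
  assume "\<forall>b\<in>(Basis::(real^'n) set). P b"
  then show "\<forall>i. P (axis i 1)" by simp
next
  assume a: "\<forall>i. P (axis i 1)"
  show "\<forall>b\<in>(Basis::(real^'n) set). P b"
  proof
    fix b :: "real^'n" assume "b \<in> Basis"
    then obtain i u where "u \<in> (Basis::real set)" "b = axis i u" unfolding Basis_vec_def by blast
    then show "P b" using a by simp
  qed
qed
lemma has_derivative_cart_iff:
  fixes f :: "real^'n \<Rightarrow> real^'n"
  shows "(f has_derivative f') (at a) \<longleftrightarrow> (\<forall>i. ((\<lambda>x. f x $ i) has_derivative (\<lambda>x. f' x $ i)) (at a))"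
proof -
  have 1: "(f has_derivative f') (at a) \<longleftrightarrow> (\<forall>b\<in>(Basis::(real^'n) set). ((\<lambda>x. f x \<bullet> b) has_derivative (\<lambda>x. f' x \<bullet> b)) (at a))"
    by (rule has_derivative_componentwise_within)
  have 2: "(\<lambda>x. g x \<bullet> axis i (1::real)) = (\<lambda>x. g x $ i)" for g :: "'z \<Rightarrow> real^'n" and i
    by (rule ext) (simp only: inner_axis inner_real_def mult_1_right)
  show ?thesis unfolding 1 L1 2 ..
qed

theorem propositionS11:
  fixes J :: "real^'n^'n" and \<alpha> \<beta> :: real
    and x :: "nat \<Rightarrow> real^'n" and xstar :: "real^'n"
  assumes symm: "transpose J = J"
    and diag0: "\<forall>i. J $ i $ i = 0"
    and apos: "\<alpha> > 0" and bpos: "\<beta> > 0"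
    and lmin: "lambda_min (J + \<alpha> *\<^sub>R mat 1) > 0"
    and iter: "\<forall>k. x (Suc k) = doch_map J \<alpha> \<beta> (x k)"
    and lim: "x \<longlonglongrightarrow> xstar"
    and nz: "\<forall>i. xstar $ i \<noteq> 0"
    and jac: "doch_map J \<alpha> \<beta> differentiable (at xstar)"
    and jacnorm: "onorm (frechet_derivative (doch_map J \<alpha> \<beta>) (at xstar)) < 1"
  shows "strict_local_min (H_obj J \<alpha> \<beta>) xstar"
proof -
  define T where "T = doch_map J \<alpha> \<beta>"
  define A where "A = (\<lambda>h::real^'n. J *v h + \<alpha> *\<^sub>R h)"
  have Aeq: "(J + \<alpha> *\<^sub>R mat 1) *v h = A h" for h
    by (simp add: A_def matrix_vector_mult_add_rdistrib matrix_scaleR_vector_ac[symmetric]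
        scaleR_matrix_vector_assoc[symmetric])
  have Tdef: "T y = (\<chi> i. root 3 (A y $ i / \<beta>))" for y
    unfolding T_def doch_map_def Aeq by (simp add: divide_inverse mult.commute)
  have cont: "isCont T xstar" using jac unfolding T_def
    by (simp add: differentiable_imp_continuous_within)
  have "(\<lambda>k. T (x k)) \<longlonglongrightarrow> T xstar"
    using isCont_tendsto_compose[OF cont lim] .
  moreover have "(\<lambda>k. T (x k)) \<longlonglongrightarrow> xstar"
    using iter lim LIMSEQ_Suc[OF lim] unfolding T_def by simp
  ultimately have fixp: "T xstar = xstar" using LIMSEQ_unique by blast
  have fixc: "\<beta> * (xstar $ i)^3 = A xstar $ i" for i
  proof -
    have "xstar $ i = root 3 (A xstar $ i / \<beta>)" using fixp Tdef
      by (metis vec_lambda_beta)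
    then have "(xstar $ i)^3 = A xstar $ i / \<beta>" by (simp add: odd_real_root_pow)
    then show ?thesis using bpos by (simp add: field_simps)
  qed
  define m where "m = (\<lambda>i. 3 * \<beta> * (xstar $ i)^2)"
  have mpos: "m i > 0" for i using nz bpos by (simp add: m_def)
  have mne: "m i \<noteq> 0" for i using mpos[of i] by simp
  define B where "B = (\<lambda>h::real^'n. \<chi> i. A h $ i / m i)"
  have blA: "bounded_linear A" unfolding A_def
    by (intro bounded_linear_add matrix_vector_mul_bounded_linear bounded_linear_scaleR_right bounded_linear_ident)
  have blAi: "bounded_linear (\<lambda>y. A y $ i / \<beta>)" for i
    using bounded_linear_compose[OF bounded_linear_divide bounded_linear_compose[OF bounded_linear_vec_nth blA]]
    by (simp add: o_def)
  have compder: "((\<lambda>y. root 3 (A y $ i / \<beta>)) has_derivative (\<lambda>h. A h $ i / m i)) (at xstar)" for i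
  proof -
    have r: "root 3 (A xstar $ i / \<beta>) = xstar $ i" using fixp Tdef by (metis vec_lambda_beta)
    have "A xstar $ i / \<beta> \<noteq> 0" using r nz by force
    then have "(root 3 has_field_derivative (inverse (3 * (xstar $ i)^2))) (at (A xstar $ i / \<beta>))"
      using DERIV_odd_real_root[of 3 "A xstar $ i / \<beta>"] r
      by simp
    then have "(root 3 has_derivative (*) (inverse (3 * (xstar $ i)^2))) (at (A xstar $ i / \<beta>))"
      by (simp only: has_field_derivative_def)
    from diff_chain_at[OF bounded_linear_imp_has_derivative[OF blAi] this]
    have "((\<lambda>y. root 3 (A y $ i / \<beta>)) has_derivative (\<lambda>h. inverse (3 * (xstar $ i)^2) * (A h $ i / \<beta>))) (at xstar)"
      by (simp only: o_def)
    moreover have "(\<lambda>h. inverse (3 * (xstar $ i)^2) * (A h $ i / \<beta>)) = (\<lambda>h. A h $ i / m i)"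
      by (rule ext) (simp only: m_def inv_div_aux)
    ultimately show ?thesis by simp
  qed
  have Tder: "(T has_derivative B) (at xstar)"
    unfolding has_derivative_cart_iff
  proof
    fix i
    have e1: "(\<lambda>y. T y $ i) = (\<lambda>y. root 3 (A y $ i / \<beta>))"
      by (rule ext) (simp only: Tdef vec_lambda_beta)
    have e2: "(\<lambda>h. B h $ i) = (\<lambda>h. A h $ i / m i)"
      by (rule ext) (simp only: B_def vec_lambda_beta)
    show "((\<lambda>y. T y $ i) has_derivative (\<lambda>h. B h $ i)) (at xstar)"
      unfolding e1 e2 by (rule compder)
  qed
  have blB: "bounded_linear B" using Tder has_derivative_bounded_linear by blast
  define c where "c = onorm B"
  have c1: "c < 1" using jacnorm frechet_derivative_at[OF Tder] unfolding c_def T_def by simp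
  have c0: "c \<ge> 0" unfolding c_def using onorm_pos_le[OF blB] .
  have Bn: "norm (B h) \<le> c * norm h" for h unfolding c_def using onorm[OF blB] .
  define ip where "ip = (\<lambda>y z::real^'n. \<Sum>i\<in>UNIV. m i * y $ i * z $ i)"
  have Aself: "(A y) \<bullet> z = y \<bullet> (A z)" for y z
    using matJ_sym[OF symm, of y z] by (simp add: A_def inner_add_left inner_add_right)
  have ipB: "ip (B y) z = (A y) \<bullet> z" for y z
    unfolding ip_def B_def inner_vec_def
    by (intro sum.cong) (auto simp: mne)
  have ipcomm: "ip y z = ip z y" for y z unfolding ip_def by (simp add: mult_ac)
  have sa: "ip (B y) z = ip y (B z)" for y z
    using ipB[of y z] ipB[of z y] Aself[of y z] ipcomm[of y "B z"] by (simp add: inner_commute)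
  have cs: "(ip y z)^2 \<le> ip y y * ip z z" for y z
  proof -
    have e1: "ip y z = (\<Sum>i\<in>UNIV. (sqrt (m i) * y $ i) * (sqrt (m i) * z $ i))"
      unfolding ip_def using mpos
      by (intro sum.cong) (auto simp: mult_ac real_sqrt_mult[symmetric] less_imp_le)
    have e2: "ip w w = (\<Sum>i\<in>UNIV. (sqrt (m i) * w $ i)^2)" for w
      unfolding ip_def using mpos
      by (intro sum.cong) (auto simp: power_mult_distrib power2_eq_square[of "w $ _"] less_imp_le)
    show ?thesis unfolding e1 e2 by (rule Cauchy_Schwarz_ineq_sum)
  qed
  have nsq: "(norm y)^2 = (\<Sum>i\<in>UNIV. y $ i * y $ i)" for y :: "real^'n"
    by (simp add: power2_norm_eq_inner inner_vec_def)
  define mmin where "mmin = Min (range m)"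
  define mmax where "mmax = Max (range m)"
  have mmin_pos: "mmin > 0" unfolding mmin_def using mpos by (auto simp: Min_gr_iff)
  have mmin_le: "mmin \<le> m i" for i unfolding mmin_def by simp
  have mmax_ge: "m i \<le> mmax" for i unfolding mmax_def by simp
  have qlow: "mmin * (norm y)^2 \<le> ip y y" for y
    unfolding nsq ip_def sum_distrib_left
    by (intro sum_mono) (metis mult.assoc mult_right_mono mmin_le zero_le_square)
  have qup: "ip y y \<le> mmax * (norm y)^2" for y
    unfolding nsq ip_def sum_distrib_left
    by (intro sum_mono) (metis mult.assoc mult_right_mono mmax_ge zero_le_square)
  have Bpow: "norm ((B ^^ n) y) \<le> c ^ n * norm y" for n y
  proof (induction n)
    case 0 then show ?case by simp
  next
    case (Suc n)
    have "norm ((B ^^ Suc n) y) \<le> c * norm ((B ^^ n) y)" using Bn by simp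
    also have "\<dots> \<le> c * (c ^ n * norm y)" using Suc c0 by (rule mult_left_mono)
    finally show ?case by (simp add: mult_ac)
  qed
  have pos: "(A h) \<bullet> h < ip h h" if hnz: "h \<noteq> 0" for h
  proof (rule ccontr)
    assume "\<not> ?thesis"
    then have hge: "ip (B h) h \<ge> ip h h" by (simp add: ipB)
    have nh: "norm h > 0" using hnz by simp
    have hpos: "ip h h > 0" using qlow[of h] mmin_pos nh
      by (smt (verit) mult_pos_pos zero_less_power)
    have mmax_pos: "mmax > 0" using mmin_le[of undefined] mmax_ge[of undefined] mmin_pos by linarith
    obtain k where k: "c ^ k < mmin / mmax" using real_arch_pow_inv[OF divide_pos_pos[OF mmin_pos mmax_pos] c1] by blast
    have "c ^ (2^k) \<le> c ^ k" using c0 c1 less_exp[of k] by (intro power_decreasing) auto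
    moreover have "(c ^ (2^k))^2 \<le> c ^ (2^k)" using c0 c1
      by (simp add: power2_eq_square mult_left_le power_le_one)
    ultimately have ck: "(c ^ (2^k))^2 < mmin / mmax" using k by linarith
    have "ip h h \<le> ip ((B ^^ (2^k)) h) ((B ^^ (2^k)) h)"
      by (rule doubling[OF sa cs hpos hge])
    also have "\<dots> \<le> mmax * (norm ((B ^^ (2^k)) h))^2" by (rule qup)
    also have "\<dots> \<le> mmax * (c ^ (2^k) * norm h)^2"
      using Bpow mmax_pos by (intro mult_left_mono power_mono) auto
    also have "\<dots> = (mmax * (c ^ (2^k))^2) * (norm h)^2" by (simp add: power_mult_distrib)
    also have "\<dots> < mmin * (norm h)^2"
      using ck mmax_pos nh by (intro mult_strict_right_mono) (auto simp: field_simps)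
    finally show False using qlow[of h] by simp
  qed
  define g where "g = (\<lambda>h. ip h h - (A h) \<bullet> h)"
  have gcont: "continuous_on UNIV g"
    unfolding g_def ip_def
    by (intro continuous_intros linear_continuous_on blA)
  have sne: "sphere (0::real^'n) 1 \<noteq> {}" by simp
  obtain u0 where u0: "u0 \<in> sphere 0 1" and u0min: "\<And>y. y \<in> sphere 0 1 \<Longrightarrow> g u0 \<le> g y"
    using continuous_attains_inf[OF compact_sphere sne continuous_on_subset[OF gcont subset_UNIV]]
    by blast
  define \<mu> where "\<mu> = g u0"
  have "u0 \<noteq> 0" using u0 by auto
  then have mu_pos: "\<mu> > 0" using pos[of u0] unfolding \<mu>_def g_def by auto
  have ghom: "g (t *\<^sub>R h) = t^2 * g h" for t h
  proof -
    have "ip (t *\<^sub>R h) (t *\<^sub>R h) = t^2 * ip h h"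
      unfolding ip_def sum_distrib_left by (intro sum.cong) (auto simp: power2_eq_square mult_ac)
    moreover have "A (t *\<^sub>R h) = t *\<^sub>R A h"
      by (simp add: A_def matrix_vector_mult_scaleR scaleR_add_right)
    ultimately show ?thesis unfolding g_def by (simp add: power2_eq_square algebra_simps)
  qed
  have glow: "g h \<ge> \<mu> * (norm h)^2" for h
  proof (cases "h = 0")
    case True then show ?thesis by (simp add: g_def ip_def A_def)
  next
    case False
    define u where "u = inverse (norm h) *\<^sub>R h"
    have u: "u \<in> sphere 0 1" using False by (simp add: u_def)
    have "h = norm h *\<^sub>R u" using False by (simp add: u_def)
    then have "g h = (norm h)^2 * g u" using ghom by metis
    then show ?thesis using u0min[OF u] unfolding \<mu>_def
      by (metis mult.commute mult_right_mono zero_le_power2)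
  qed
  have F1: "h \<bullet> (J *v xstar) = (\<Sum>i\<in>UNIV. h $ i * (\<beta> * (xstar $ i)^3 - \<alpha> * xstar $ i))" for h
    unfolding inner_vec_def by (intro sum.cong) (auto simp: fixc A_def)
  have F2: "(xstar + h) \<bullet> (J *v (xstar + h)) = xstar \<bullet> (J *v xstar) + 2 * (h \<bullet> (J *v xstar)) + h \<bullet> (J *v h)" for h
  proof -
    have "xstar \<bullet> (J *v h) = h \<bullet> (J *v xstar)"
      using matJ_sym[OF symm, of xstar h] by (simp add: inner_commute)
    then show ?thesis by (simp add: matrix_vector_right_distrib inner_add)
  qed
  have gexp: "g h = (\<Sum>i\<in>UNIV. m i * h $ i * h $ i) - \<alpha> * (\<Sum>i\<in>UNIV. h $ i ^ 2) - h \<bullet> (J *v h)" for h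
    unfolding g_def ip_def A_def
    by (simp add: inner_vec_def power2_eq_square sum.distrib sum_distrib_left algebra_simps)
  have expand: "H_obj J \<alpha> \<beta> (xstar + h) - H_obj J \<alpha> \<beta> xstar
      = g h / 2 + \<beta> * (\<Sum>i\<in>UNIV. xstar $ i * h $ i ^ 3 + h $ i ^ 4 / 4)" for h
    unfolding H_obj_def F2 F1 gexp m_def
    by (simp add: sum_subtractf sum.distrib sum_distrib_left algebra_simps power2_eq_square power3_eq_cube power4_eq_xxxx
        sum_divide_distrib add_divide_distrib diff_divide_distrib)
  define nx where "nx = norm xstar"
  have cubic: "\<beta> * (\<Sum>i\<in>UNIV. xstar $ i * h $ i ^ 3 + h $ i ^ 4 / 4) \<ge> - (\<beta> * nx * norm h * (norm h)^2)" for h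
  proof -
    have t: "xstar $ i * h $ i ^ 3 + h $ i ^ 4 / 4 \<ge> - (nx * norm h) * (h $ i * h $ i)" for i
    proof -
      have a: "\<bar>xstar $ i\<bar> \<le> nx" unfolding nx_def by (rule component_le_norm_cart)
      have b: "\<bar>h $ i\<bar> \<le> norm h" by (rule component_le_norm_cart)
      have "\<bar>xstar $ i * h $ i\<bar> \<le> nx * norm h"
        using a b by (simp add: abs_mult mult_mono)
      then have "xstar $ i * h $ i \<ge> - (nx * norm h)" by linarith
      then have "(xstar $ i * h $ i) * (h $ i * h $ i) \<ge> - (nx * norm h) * (h $ i * h $ i)"
        by (intro mult_right_mono) auto
      moreover have "h $ i ^ 4 / 4 \<ge> 0" by simp
      moreover have "xstar $ i * h $ i ^ 3 = (xstar $ i * h $ i) * (h $ i * h $ i)"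
        by (simp add: power3_eq_cube mult_ac)
      ultimately show ?thesis by linarith
    qed
    have "(\<Sum>i\<in>UNIV. xstar $ i * h $ i ^ 3 + h $ i ^ 4 / 4) \<ge> (\<Sum>i\<in>UNIV. - (nx * norm h) * (h $ i * h $ i))"
      by (intro sum_mono t)
    also have "(\<Sum>i\<in>UNIV. - (nx * norm h) * (h $ i * h $ i)) = - (nx * norm h * (norm h)^2)"
      by (simp add: nsq sum_distrib_left sum_negf)
    finally show ?thesis using bpos
      by (smt (verit, ccfv_SIG) mult.assoc mult_left_mono mult_minus_right)
  qed
  define e where "e = \<mu> / (2 * (\<beta> * nx + 1))"
  have nx0: "nx \<ge> 0" unfolding nx_def by simp
  have bnx: "\<beta> * nx \<ge> 0" using bpos nx0 by simp
  have e_pos: "e > 0" unfolding e_def using mu_pos bnx by (intro divide_pos_pos) auto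
  show ?thesis
    unfolding strict_local_min_def
  proof (intro exI[of _ e] conjI allI impI e_pos)
    fix y assume yy: "y \<noteq> xstar \<and> dist y xstar < e"
    define h where "h = y - xstar"
    have y: "y = xstar + h" unfolding h_def by simp
    have nh: "norm h > 0" "norm h < e" using yy by (auto simp: h_def dist_norm)
    have "(\<beta> * nx + 1) * norm h < \<mu> / 2"
    proof -
      have "(\<beta> * nx + 1) * norm h < (\<beta> * nx + 1) * e"
        using nh bnx by (intro mult_strict_left_mono) auto
      also have "\<dots> = \<mu> / 2" unfolding e_def using bnx
        by (simp add: field_simps)
      finally show ?thesis .
    qed
    moreover have "(\<beta> * nx + 1) * norm h = \<beta> * nx * norm h + norm h" by (simp add: algebra_simps)
    ultimately have "\<beta> * nx * norm h < \<mu> / 2" using nh(1) by linarith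
    then have "0 < (\<mu> / 2 - \<beta> * nx * norm h) * (norm h)^2" using nh by simp
    also have "\<dots> \<le> g h / 2 - \<beta> * nx * norm h * (norm h)^2"
      using glow[of h] by (simp add: algebra_simps)
    also have "\<dots> \<le> H_obj J \<alpha> \<beta> y - H_obj J \<alpha> \<beta> xstar"
      unfolding y expand using cubic[of h] by simp
    finally show "H_obj J \<alpha> \<beta> xstar < H_obj J \<alpha> \<beta> y" by simp
  qed
qed
end
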